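(* Let $n\ge 1$, let $z_1,\dots,z_n$ be distinct integers none of which is $1$ or $-1$, and let $D=\{1,-1,z_1,\dots,z_n\}$. Then $diam(D)=2$ if $n=1$, $diam(D)=3$ if $n=2$, and $diam(D)=4$ if $n>2$.
   Context: A signed tree is a pair $(T,s)$ where $T$ is a finite tree and $s:E(T)\to\{+,-\}$. The signed degree $sdeg(v)$ of a vertex is the number of incident positive edges minus the number of incident negative edges. $(T,s)$ realizes (satisfies) a set $D$ of integers if $D=\{sdeg(v):v\in V(T)\}$. For a set $D$ containing $1$ or $-1$, $diam(D)=\min\{diam(T): \text{some signed tree }(T,s)\text{ realizes }D\}$, where $diam(T)$ is the diameter of the tree $T$. *)

theory Defs
  imports Main
begin

(* Undirected simple graphs on vertex set V :: nat set (vertex labels in nat are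
   w.l.o.g. for finite trees); edges are 2-element vertex sets. *)

definition is_walk :: "nat set set \<Rightarrow> nat list \<Rightarrow> bool" where
  "is_walk E xs \<longleftrightarrow> xs \<noteq> [] \<and> (\<forall>i. Suc i < length xs \<longrightarrow> {xs ! i, xs ! Suc i} \<in> E)"

definition reachable :: "nat set set \<Rightarrow> nat \<Rightarrow> nat \<Rightarrow> bool" where
  "reachable E u v \<longleftrightarrow> (\<exists>xs. is_walk E xs \<and> hd xs = u \<and> last xs = v)"

definition is_graph :: "nat set \<Rightarrow> nat set set \<Rightarrow> bool" where
  "is_graph V E \<longleftrightarrow> finite V \<and> (\<forall>e\<in>E. e \<subseteq> V \<and> card e = 2)"

definition connected_graph :: "nat set \<Rightarrow> nat set set \<Rightarrow> bool" where
  "connected_graph V E \<longleftrightarrow> V \<noteq> {} \<and> (\<forall>u\<in>V. \<forall>v\<in>V. reachable E u v)"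

(* a cycle: a closed walk of length >= 3 whose vertices (except the repeated end)
   are pairwise distinct *)
definition has_cycle :: "nat set set \<Rightarrow> bool" where
  "has_cycle E \<longleftrightarrow> (\<exists>xs. is_walk E xs \<and> length xs \<ge> 4 \<and> hd xs = last xs \<and> distinct (tl xs))"

definition is_tree :: "nat set \<Rightarrow> nat set set \<Rightarrow> bool" where
  "is_tree V E \<longleftrightarrow> is_graph V E \<and> connected_graph V E \<and> \<not> has_cycle E"

definition dist :: "nat set set \<Rightarrow> nat \<Rightarrow> nat \<Rightarrow> nat" where
  "dist E u v = (LEAST k. \<exists>xs. is_walk E xs \<and> hd xs = u \<and> last xs = v \<and> length xs = Suc k)"

definition tree_diam :: "nat set \<Rightarrow> nat set set \<Rightarrow> nat" where
  "tree_diam V E = Max {dist E u v | u v. u \<in> V \<and> v \<in> V}"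

(* sign of an edge: True = positive, False = negative *)
definition sdeg :: "nat set set \<Rightarrow> (nat set \<Rightarrow> bool) \<Rightarrow> nat \<Rightarrow> int" where
  "sdeg E s v = int (card {e\<in>E. v \<in> e \<and> s e}) - int (card {e\<in>E. v \<in> e \<and> \<not> s e})"

definition realizes :: "nat set \<Rightarrow> nat set set \<Rightarrow> (nat set \<Rightarrow> bool) \<Rightarrow> int set \<Rightarrow> bool" where
  "realizes V E s D \<longleftrightarrow> D = sdeg E s ` V"

definition diamD :: "int set \<Rightarrow> nat" where
  "diamD D = (LEAST d. \<exists>V E s. is_tree V E \<and> realizes V E s D \<and> tree_diam V E = d)"

end

theory Submission
  imports Defs
begin


lemma is_walk_single[simp]: "is_walk E [x]"
  by (simp add: is_walk_def)

lemma is_walk_Nil[simp]: "\<not> is_walk E []"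
  by (simp add: is_walk_def)

lemma is_walk_Cons2[simp]: "is_walk E (x#y#r) \<longleftrightarrow> {x,y} \<in> E \<and> is_walk E (y#r)"
proof
  assume h: "is_walk E (x#y#r)"
  have hh: "\<forall>i. Suc i < length (x#y#r) \<longrightarrow> {(x#y#r) ! i, (x#y#r) ! Suc i} \<in> E"
    using h by (simp add: is_walk_def)
  have "{x,y} \<in> E" using hh[rule_format, of 0] by simp
  moreover have "is_walk E (y#r)" unfolding is_walk_def
  proof (intro conjI allI impI)
    fix i assume "Suc i < length (y#r)"
    then show "{(y#r) ! i, (y#r) ! Suc i} \<in> E" using hh[rule_format, of "Suc i"] by simp
  qed simp
  ultimately show "{x,y} \<in> E \<and> is_walk E (y#r)" by simp
next
  assume h: "{x,y} \<in> E \<and> is_walk E (y#r)"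
  show "is_walk E (x#y#r)" unfolding is_walk_def
  proof (intro conjI allI impI)
    fix i assume "Suc i < length (x#y#r)"
    then show "{(x#y#r) ! i, (x#y#r) ! Suc i} \<in> E" using h unfolding is_walk_def
      by (cases i) auto
  qed simp
qed

fun nb :: "nat list \<Rightarrow> bool" where
  "nb (x # y # z # r) = (x \<noteq> z \<and> nb (y # z # r))"
| "nb _ = True"

lemma nb_nth: "nb xs \<longleftrightarrow> (\<forall>i. Suc (Suc i) < length xs \<longrightarrow> xs ! i \<noteq> xs ! Suc (Suc i))"
proof (induction xs rule: nb.induct)
  case (1 x y z r)
  show ?case
  proof
    assume "nb (x # y # z # r)"
    then show "\<forall>i. Suc (Suc i) < length (x # y # z # r) \<longrightarrow> (x # y # z # r) ! i \<noteq> (x # y # z # r) ! Suc (Suc i)"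
      using 1 by (auto simp: nth_Cons split: nat.splits)
  next
    assume h: "\<forall>i. Suc (Suc i) < length (x # y # z # r) \<longrightarrow> (x # y # z # r) ! i \<noteq> (x # y # z # r) ! Suc (Suc i)"
    have "x \<noteq> z" using h[rule_format, of 0] by simp
    moreover have "nb (y#z#r)" unfolding 1
    proof (intro allI impI)
      fix i assume "Suc (Suc i) < length (y # z # r)"
      then show "(y # z # r) ! i \<noteq> (y # z # r) ! Suc (Suc i)" using h[rule_format, of "Suc i"] by simp
    qed
    ultimately show "nb (x # y # z # r)" by simp
  qed
qed auto

lemma nb_tl: "nb (x # r) \<Longrightarrow> nb r"
  by (cases r rule: nb.cases) auto

lemma walk_sub:
  assumes "is_walk E xs" "i + l \<le> length xs" "l \<ge> 1"
  shows "is_walk E (take l (drop i xs))"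
  using assms unfolding is_walk_def
  by (auto simp: min_def)

lemma nb_sub:
  assumes "nb xs" "i + l \<le> length xs"
  shows "nb (take l (drop i xs))"
  using assms unfolding nb_nth
  by (auto simp: min_def)

lemma closed_nb_cycle:
  assumes g: "\<forall>e\<in>E. card e = 2"
  shows "is_walk E xs \<Longrightarrow> nb xs \<Longrightarrow> hd xs = last xs \<Longrightarrow> length xs \<ge> 2 \<Longrightarrow> has_cycle E"
proof (induction "length xs" arbitrary: xs rule: less_induct)
  case less
  show ?case
  proof (cases "length xs \<ge> 4")
    case False
    then have "length xs = 2 \<or> length xs = 3" using less.prems by auto
    then show ?thesis
    proof
      assume "length xs = 2"
      then obtain u v where "xs = [u,v]" by (auto simp: length_Suc_conv numeral_2_eq_2)
      then show ?thesis using less.prems g by auto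
    next
      assume "length xs = 3"
      then obtain u v w where "xs = [u,v,w]" by (auto simp: length_Suc_conv numeral_3_eq_3)
      then show ?thesis using less.prems by auto
    qed
  next
    case True
    show ?thesis
    proof (cases "distinct (tl xs)")
      case True
      then show ?thesis using \<open>length xs \<ge> 4\<close> less.prems unfolding has_cycle_def by blast
    next
      case False
      then obtain i j where ij: "i < j" "j < length (tl xs)" "tl xs ! i = tl xs ! j"
        by (metis distinct_conv_nth linorder_neqE_nat)
      define ys where "ys = take (j - i + 1) (drop (Suc i) xs)"
      have len: "length ys = j - i + 1" using ij unfolding ys_def by auto
      have w: "is_walk E ys" unfolding ys_def using ij less.prems by (intro walk_sub) auto
      have n: "nb ys" unfolding ys_def using ij less.prems by (intro nb_sub) auto
      have "hd ys = xs ! Suc i" unfolding ys_def using ij by (simp add: hd_drop_conv_nth hd_take)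
      moreover have "last ys = xs ! Suc j"
      proof -
        have "last ys = ys ! (j - i)" using len by (metis add_diff_cancel_right' last_conv_nth list.size(3) zero_neq_one add_is_0)
        also have "\<dots> = xs ! (Suc i + (j - i))" unfolding ys_def using ij by simp
        finally show ?thesis using ij by simp
      qed
      ultimately have "hd ys = last ys" using ij by (simp add: nth_tl)
      then show ?thesis using less.hyps[of ys] len w n ij by auto
    qed
  qed
qed

lemma nb_shortest:
  assumes g: "\<forall>e\<in>E. card e = 2" and nc: "\<not> has_cycle E"
  shows "is_walk E q \<Longrightarrow> is_walk E p \<Longrightarrow> nb p \<Longrightarrow> hd p = hd q \<Longrightarrow> last p = last q \<Longrightarrow> length p \<le> length q"
proof (induction q arbitrary: p)
  case Nil
  then show ?case by simp
next
  case (Cons a q0)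
  show ?case
  proof (cases q0)
    case Nil
    then have "hd p = last p" using Cons.prems by simp
    then have "\<not> length p \<ge> 2" using closed_nb_cycle[OF g, of p] Cons.prems nc by blast
    then show ?thesis using Nil by simp
  next
    case (Cons y q')
    show ?thesis
    proof (cases p)
      case Nil
      then show ?thesis using Cons.prems by simp
    next
      case (Cons x p1)
      show ?thesis
      proof (cases p1)
        case Nil
        then show ?thesis using \<open>p = x # p1\<close> by simp
      next
        case (Cons x2 p')
        have hx: "x = a" using \<open>p = x # p1\<close> Cons.prems by simp
        show ?thesis
        proof (cases "x2 = y")
          case True
          have "length p1 \<le> length q0"
            apply (rule Cons.IH)
            using Cons.prems \<open>p = x # p1\<close> \<open>q0 = y # q'\<close> \<open>p1 = x2 # p'\<close> True
            by (auto intro: nb_tl)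
          then show ?thesis using \<open>p = x # p1\<close> by simp
        next
          case False
          have e: "{y,a} \<in> E" using Cons.prems \<open>q0 = y # q'\<close> by (simp add: insert_commute)
          have "length (y # p) \<le> length q0"
            apply (rule Cons.IH)
            using Cons.prems \<open>p = x # p1\<close> \<open>q0 = y # q'\<close> \<open>p1 = x2 # p'\<close> False e hx
            by auto
          then show ?thesis by simp
        qed
      qed
    qed
  qed
qed



lemma walk_append:
  "is_walk E xs \<Longrightarrow> is_walk E ys \<Longrightarrow> last xs = hd ys \<Longrightarrow> is_walk E (xs @ tl ys)"
proof (induction xs)
  case Nil then show ?case by simp
next
  case (Cons x r)
  show ?case
  proof (cases r)
    case Nil
    then show ?thesis using Cons.prems by (cases ys) auto
  next
    case (Cons y r')
    then show ?thesis using Cons.prems Cons.IH by auto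
  qed
qed

lemma walk_append_hd: "xs \<noteq> [] \<Longrightarrow> hd (xs @ tl ys) = hd xs" by simp

lemma walk_append_last: "xs \<noteq> [] \<Longrightarrow> ys \<noteq> [] \<Longrightarrow> last xs = hd ys \<Longrightarrow> last (xs @ tl ys) = last ys"
  by (cases ys) auto

lemma walk_rev: "is_walk E xs \<Longrightarrow> is_walk E (rev xs)"
proof (induction xs)
  case Nil then show ?case by simp
next
  case (Cons x r)
  show ?case
  proof (cases r)
    case Nil then show ?thesis by simp
  next
    case (Cons y r')
    have w: "is_walk E (rev r)" using Cons.IH Cons.prems \<open>r = y # r'\<close> by simp
    have e: "{y, x} \<in> E" using Cons.prems \<open>r = y # r'\<close> by (simp add: insert_commute)
    have "is_walk E (rev r @ tl [y, x])"
      by (rule walk_append[OF w]) (use e \<open>r = y # r'\<close> in \<open>auto simp: last_rev\<close>)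
    then show ?thesis by simp
  qed
qed

lemma dist_le: "is_walk E xs \<Longrightarrow> hd xs = u \<Longrightarrow> last xs = v \<Longrightarrow> dist E u v \<le> length xs - 1"
  unfolding dist_def
  by (rule Least_le) (cases xs, auto)

lemma dist_ex: "reachable E u v \<Longrightarrow> \<exists>xs. is_walk E xs \<and> hd xs = u \<and> last xs = v \<and> length xs = Suc (dist E u v)"
  unfolding dist_def reachable_def
proof (erule exE)
  fix xs assume h: "is_walk E xs \<and> hd xs = u \<and> last xs = v"
  then have "\<exists>k xs. is_walk E xs \<and> hd xs = u \<and> last xs = v \<and> length xs = Suc k"
    by (intro exI[of _ "length xs - 1"] exI[of _ xs]) (cases xs, auto)
  then show "\<exists>xs. is_walk E xs \<and> hd xs = u \<and> last xs = v \<and>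
    length xs = Suc (LEAST k. \<exists>xs. is_walk E xs \<and> hd xs = u \<and> last xs = v \<and> length xs = Suc k)"
    by (rule LeastI_ex)
qed

lemma reachable_walk: "is_walk E xs \<Longrightarrow> reachable E (hd xs) (last xs)"
  unfolding reachable_def by blast

lemma reachable_refl: "reachable E u u"
  using reachable_walk[of E "[u]"] by simp

lemma reachable_edge: "{u,v} \<in> E \<Longrightarrow> reachable E u v"
  using reachable_walk[of E "[u,v]"] by simp

lemma reachable_trans: "reachable E u w \<Longrightarrow> reachable E w v \<Longrightarrow> reachable E u v"
  unfolding reachable_def
proof (elim exE conjE)
  fix xs ys assume a: "is_walk E xs" "hd xs = u" "last xs = w" "is_walk E ys" "hd ys = w" "last ys = v"
  then have "xs \<noteq> []" "ys \<noteq> []" by auto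
  then show "\<exists>zs. is_walk E zs \<and> hd zs = u \<and> last zs = v"
    using a walk_append[of E xs ys] walk_append_last[of xs ys] by (intro exI[of _ "xs @ tl ys"]) auto
qed

lemma reachable_sym: "reachable E u v \<Longrightarrow> reachable E v u"
  unfolding reachable_def
proof (elim exE conjE)
  fix xs assume a: "is_walk E xs" "hd xs = u" "last xs = v"
  then have "xs \<noteq> []" by auto
  then show "\<exists>zs. is_walk E zs \<and> hd zs = v \<and> last zs = u"
    using a walk_rev[of E xs] by (intro exI[of _ "rev xs"]) (auto simp: hd_rev last_rev)
qed

lemma dist_triangle: "reachable E u w \<Longrightarrow> reachable E w v \<Longrightarrow> dist E u v \<le> dist E u w + dist E w v"
proof -
  assume r1: "reachable E u w" and r2: "reachable E w v"
  obtain xs where a: "is_walk E xs" "hd xs = u" "last xs = w" "length xs = Suc (dist E u w)"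
    using dist_ex[OF r1] by blast
  obtain ys where b: "is_walk E ys" "hd ys = w" "last ys = v" "length ys = Suc (dist E w v)"
    using dist_ex[OF r2] by blast
  have ne: "xs \<noteq> []" "ys \<noteq> []" using a b by auto
  have "dist E u v \<le> length (xs @ tl ys) - 1"
    apply (rule dist_le)
    using a b ne walk_append[of E xs ys] walk_append_last[of xs ys] by auto
  then show ?thesis using a b by simp
qed

lemma dist_sym: "reachable E v u \<Longrightarrow> dist E u v \<le> dist E v u"
proof -
  assume r: "reachable E v u"
  obtain xs where a: "is_walk E xs" "hd xs = v" "last xs = u" "length xs = Suc (dist E v u)"
    using dist_ex[OF r] by blast
  have "dist E u v \<le> length (rev xs) - 1"
    apply (rule dist_le)
    using a walk_rev[of E xs] by (auto simp: hd_rev last_rev)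
  then show ?thesis using a by simp
qed

lemma dist_edge: "{x,y} \<in> E \<Longrightarrow> dist E x y \<le> 1"
  using dist_le[of E "[x,y]" x y] by simp

lemma dist_refl: "dist E x x = 0"
  using dist_le[of E "[x]" x x] by simp

lemma diam_set_eq: "{dist E u v | u v. u \<in> V \<and> v \<in> V} = (\<lambda>(u,v). dist E u v) ` (V \<times> V)"
  by auto

lemma diam_ge: "finite V \<Longrightarrow> u \<in> V \<Longrightarrow> v \<in> V \<Longrightarrow> dist E u v \<le> tree_diam V E"
  unfolding tree_diam_def diam_set_eq by (rule Max_ge) auto

lemma diam_le: "finite V \<Longrightarrow> V \<noteq> {} \<Longrightarrow> (\<forall>u\<in>V. \<forall>v\<in>V. dist E u v \<le> d) \<Longrightarrow> tree_diam V E \<le> d"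
  unfolding tree_diam_def diam_set_eq by (subst Max_le_iff) auto

lemma nb_diam:
  assumes T: "is_tree V E" and w: "is_walk E p" and n: "nb p" and hv: "hd p \<in> V" and lv: "last p \<in> V"
  shows "length p \<le> Suc (tree_diam V E)"
proof -
  have g: "\<forall>e\<in>E. card e = 2" and nc: "\<not> has_cycle E" and fin: "finite V"
    using T unfolding is_tree_def is_graph_def by auto
  obtain q where q: "is_walk E q" "hd q = hd p" "last q = last p" "length q = Suc (dist E (hd p) (last p))"
    using dist_ex[OF reachable_walk[OF w]] by blast
  have "length p \<le> length q" using nb_shortest[OF g nc q(1) w n] q by simp
  also have "\<dots> \<le> Suc (tree_diam V E)" using q diam_ge[OF fin hv lv, of E] by simp
  finally show ?thesis .
qed



lemma card_le2:
  assumes "finite A" "\<And>a b c. a \<in> A \<Longrightarrow> b \<in> A \<Longrightarrow> c \<in> A \<Longrightarrow> a = b \<or> b = c \<or> a = c"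
  shows "card A \<le> 2"
proof (rule ccontr)
  assume "\<not> card A \<le> 2"
  then have "card A \<ge> 3" by simp
  then obtain a b c where "a \<in> A" "b \<in> A" "c \<in> A" "a \<noteq> b" "b \<noteq> c" "a \<noteq> c"
    using assms(1) by (auto simp: card_le_Suc_iff numeral_3_eq_3 dest!: card_le_Suc_iff[THEN iffD1])
  then show False using assms(2) by blast
qed

lemma edge_other: "card e = 2 \<Longrightarrow> v \<in> e \<Longrightarrow> \<exists>w. w \<noteq> v \<and> e = {v, w}"
  by (auto simp: card_2_iff)

lemma LB:
  assumes T: "is_tree V E" and one: "1 \<in> sdeg E s ` V" and d: "tree_diam V E \<le> d" and d1: "1 \<le> d" and d3: "d \<le> 3"
  shows "card (sdeg E s ` V) \<le> d + 1"
proof -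
  have g: "\<forall>e\<in>E. e \<subseteq> V \<and> card e = 2" and nc: "\<not> has_cycle E" and fin: "finite V"
    and con: "\<forall>u\<in>V. \<forall>v\<in>V. reachable E u v"
    using T unfolding is_tree_def is_graph_def connected_graph_def by auto
  have finE: "finite E" using g fin by (meson PowI finite_Pow_iff finite_subset subsetI)
  have inV: "\<And>a b. {a,b} \<in> E \<Longrightarrow> a \<in> V \<and> b \<in> V" using g by blast
  define N where "N = {v\<in>V. \<exists>a b. a \<noteq> b \<and> {v,a}\<in>E \<and> {v,b}\<in>E}"
  have sym: "\<And>a b. {a,b} \<in> E \<Longrightarrow> {b,a} \<in> E" by (simp add: insert_commute)
  have pick: "\<And>a t. a \<in> N \<Longrightarrow> \<exists>a'. {a,a'} \<in> E \<and> a' \<noteq> t"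
    unfolding N_def by blast
  have leaf: "sdeg E s v \<in> {1, -1}" if vV: "v \<in> V" and vN: "v \<notin> N" for v
  proof -
    define Ev where "Ev = {e\<in>E. v \<in> e}"
    have finEv: "finite Ev" unfolding Ev_def using finE by simp
    have le1: "\<forall>e1\<in>Ev. \<forall>e2\<in>Ev. e1 = e2"
    proof (intro ballI, rule ccontr)
      fix e1 e2 assume e: "e1 \<in> Ev" "e2 \<in> Ev" "e1 \<noteq> e2"
      obtain w1 where w1: "w1 \<noteq> v" "e1 = {v,w1}" using edge_other[of e1 v] e g unfolding Ev_def by auto
      obtain w2 where w2: "w2 \<noteq> v" "e2 = {v,w2}" using edge_other[of e2 v] e g unfolding Ev_def by auto
      have "w1 \<noteq> w2" using w1 w2 e by auto
      then have "v \<in> N" unfolding N_def using vV e w1 w2 unfolding Ev_def by blast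
      then show False using vN by simp
    qed
    have ne: "Ev \<noteq> {}"
    proof
      assume em: "Ev = {}"
      obtain u where u: "u \<in> V" "sdeg E s u = 1" using one by auto
      have "sdeg E s v = 0" using em unfolding sdeg_def Ev_def
        by (simp add: Collect_conj_eq[symmetric]) (metis (mono_tags, lifting) Collect_empty_eq empty_iff mem_Collect_eq)
      then have "u \<noteq> v" using u by auto
      obtain xs where xs: "is_walk E xs" "hd xs = u" "last xs = v"
        using con u vV unfolding reachable_def by blast
      have "length xs \<ge> 2"
      proof (rule ccontr)
        assume "\<not> length xs \<ge> 2"
        then obtain x where "xs = [x]" using xs(1)
          by (cases xs; cases "tl xs") auto
        then show False using xs \<open>u \<noteq> v\<close> by simp
      qed
      then have "{xs ! (length xs - 2), xs ! Suc (length xs - 2)} \<in> E"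
        using xs(1) unfolding is_walk_def by auto
      moreover have "xs ! Suc (length xs - 2) = v"
      proof -
        have "xs \<noteq> []" using xs(1) by auto
        then have "xs ! (length xs - 1) = v" using xs(3) last_conv_nth by metis
        then show ?thesis using \<open>length xs \<ge> 2\<close> by (simp add: Suc_diff_Suc numeral_2_eq_2)
      qed
      ultimately show False using em unfolding Ev_def by auto
    qed
    obtain e0 where Ev: "Ev = {e0}" using ne le1 by blast
    have "{e\<in>E. v \<in> e \<and> s e} = {e\<in>Ev. s e}" "{e\<in>E. v \<in> e \<and> \<not> s e} = {e\<in>Ev. \<not> s e}"
      unfolding Ev_def by auto
    moreover have "{e\<in>Ev. s e} = (if s e0 then {e0} else {})" "{e\<in>Ev. \<not> s e} = (if s e0 then {} else {e0})"
      unfolding Ev by auto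
    ultimately have "sdeg E s v = int (card (if s e0 then {e0} else {})) - int (card (if s e0 then {} else {e0}))"
      unfolding sdeg_def by simp
    then show ?thesis by (cases "s e0") simp_all
  qed
  have sub: "sdeg E s ` V \<subseteq> {1, -1} \<union> sdeg E s ` N"
  proof
    fix y assume "y \<in> sdeg E s ` V"
    then obtain v where v: "v \<in> V" "y = sdeg E s v" by blast
    show "y \<in> {1, -1} \<union> sdeg E s ` N"
    proof (cases "v \<in> N")
      case True then show ?thesis using v by blast
    next
      case False then show ?thesis using leaf[OF v(1) False] v by blast
    qed
  qed
  have finN: "finite N" unfolding N_def using fin by simp
  have cardV: "card (sdeg E s ` V) \<le> 2 + card N"
  proof -
    have "card (sdeg E s ` V) \<le> card ({1, -1} \<union> sdeg E s ` N)"
      using finN sub by (intro card_mono) simp_all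
    also have "\<dots> \<le> card {1, -1::int} + card (sdeg E s ` N)" by (rule card_Un_le)
    also have "\<dots> \<le> 2 + card N"
    proof -
      have "card (sdeg E s ` N) \<le> card N" by (rule card_image_le[OF finN])
      moreover have "card {1, -1::int} = 2" by simp
      ultimately show ?thesis by linarith
    qed
    finally show ?thesis .
  qed
  have F1: "2 \<le> tree_diam V E" if "a \<in> N" for a
  proof -
    have "\<exists>x y. x \<noteq> y \<and> {a,x}\<in>E \<and> {a,y}\<in>E" using that by (simp add: N_def)
    then obtain x y where xy: "x \<noteq> y" "{a,x}\<in>E" "{a,y}\<in>E" by blast
    have "length [x,a,y] \<le> Suc (tree_diam V E)"
      by (rule nb_diam[OF T]) (use sym[OF xy(2)] xy inV[OF xy(2)] inV[OF xy(3)] in simp_all)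
    then show ?thesis by simp
  qed
  have F2: "3 \<le> tree_diam V E" if ab: "a \<in> N" "b \<in> N" "a \<noteq> b" "{a,b} \<in> E" for a b
  proof -
    obtain a' where a': "{a,a'} \<in> E" "a' \<noteq> b" using pick[OF ab(1)] by blast
    obtain b' where b': "{b,b'} \<in> E" "b' \<noteq> a" using pick[OF ab(2)] by blast
    have "length [a',a,b,b'] \<le> Suc (tree_diam V E)"
      by (rule nb_diam[OF T]) (use sym[OF a'(1)] a' b' ab inV[OF a'(1)] inV[OF b'(1)] in simp_all)
    then show ?thesis by simp
  qed
  have F3: "4 \<le> tree_diam V E" if ab: "a \<in> N" "b \<in> N" "a \<noteq> b" "{a,b} \<notin> E" for a b
  proof -
    have aV: "a \<in> V" "b \<in> V" using ab by (simp_all add: N_def)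
    obtain xs where xs: "is_walk E xs" "hd xs = a" "last xs = b" "length xs = Suc (dist E a b)"
      using dist_ex con aV by blast
    have dd: "dist E a b \<le> tree_diam V E" using diam_ge[OF fin aV] .
    consider "dist E a b = 0" | "dist E a b = 1" | "dist E a b = 2" | "dist E a b = 3" | "dist E a b \<ge> 4"
      by linarith
    then show ?thesis
    proof cases
      case 1
      then obtain x where "xs = [x]" using xs by (cases xs) auto
      then show ?thesis using xs ab by simp
    next
      case 2
      then obtain x y where "xs = [x,y]" using xs by (auto simp: length_Suc_conv)
      then show ?thesis using xs ab by simp
    next
      case 3
      then obtain x m y where xs3: "xs = [x,m,y]" using xs by (auto simp: length_Suc_conv numeral_2_eq_2)
      then have e: "x = a" "y = b" "{a,m} \<in> E" "{m,b} \<in> E" using xs by auto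
      obtain a' where a': "{a,a'} \<in> E" "a' \<noteq> m" using pick[OF ab(1)] by blast
      obtain b' where b': "{b,b'} \<in> E" "b' \<noteq> m" using pick[OF ab(2)] by blast
      have "length [a',a,m,b,b'] \<le> Suc (tree_diam V E)"
        by (rule nb_diam[OF T]) (use sym[OF a'(1)] a' b' ab e inV[OF a'(1)] inV[OF b'(1)] in simp_all)
      then show ?thesis by simp
    next
      case 4
      then obtain x1 x y x2 where xs4: "xs = [x1,x,y,x2]" using xs by (auto simp: length_Suc_conv numeral_3_eq_3)
      then have e: "x1 = a" "x2 = b" "{a,x} \<in> E" "{x,y} \<in> E" "{y,b} \<in> E" using xs by auto
      have ay: "a \<noteq> y" using e ab by auto
      have xb: "x \<noteq> b" using e ab by auto
      obtain a' where a': "{a,a'} \<in> E" "a' \<noteq> x" using pick[OF ab(1)] by blast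
      obtain b' where b': "{b,b'} \<in> E" "b' \<noteq> y" using pick[OF ab(2)] by blast
      have "length [a',a,x,y,b,b'] \<le> Suc (tree_diam V E)"
        by (rule nb_diam[OF T]) (use sym[OF a'(1)] a' b' ab e ay xb inV[OF a'(1)] inV[OF b'(1)] in simp_all)
      then show ?thesis by simp
    next
      case 5
      then show ?thesis using dd by simp
    qed
  qed
  have cardN: "card N + 1 \<le> d"
  proof -
    consider "d = 1" | "d = 2" | "d = 3" using d1 d3 by linarith
    then show ?thesis
    proof cases
      case 1
      then have "N = {}" using F1 d by fastforce
      then show ?thesis using 1 by simp
    next
      case 2
      have "\<forall>a\<in>N. \<forall>b\<in>N. a = b"
      proof (intro ballI, rule ccontr)
        fix a b assume "a \<in> N" "b \<in> N" "a \<noteq> b"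
        then show False using F2[of a b] F3[of a b] d 2 by (cases "{a,b} \<in> E") auto
      qed
      then have "card N \<le> 1" using card_le_Suc0_iff_eq[OF finN] by simp
      then show ?thesis using 2 by simp
    next
      case 3
      have adj: "{a,b} \<in> E" if "a \<in> N" "b \<in> N" "a \<noteq> b" for a b
        using F3[OF that] d 3 by (cases "{a,b} \<in> E") auto
      have "card N \<le> 2"
      proof (rule card_le2[OF finN])
        fix a b c assume abc: "a \<in> N" "b \<in> N" "c \<in> N"
        show "a = b \<or> b = c \<or> a = c"
        proof (rule ccontr)
          assume "\<not> (a = b \<or> b = c \<or> a = c)"
          then have "{a,b} \<in> E" "{b,c} \<in> E" "{c,a} \<in> E" using adj abc by auto
          then have "has_cycle E" unfolding has_cycle_def
            using \<open>\<not> (a = b \<or> b = c \<or> a = c)\<close> by (intro exI[of _ "[a,b,c,a]"]) auto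
          then show False using nc by simp
        qed
      qed
      then show ?thesis using 3 by simp
    qed
  qed
  show ?thesis using cardV cardN by simp
qed



lemma ptree:
  fixes par :: "nat \<Rightarrow> nat"
  assumes fin: "finite V" and r: "0 \<in> V" and par: "\<forall>x\<in>V-{0}. par x < x \<and> par x \<in> V"
    and Edef: "E = (\<lambda>x. {x, par x}) ` (V - {0})"
  shows "is_tree V E"
proof -
  have card2: "\<forall>e\<in>E. e \<subseteq> V \<and> card e = 2"
  proof
    fix e assume "e \<in> E"
    then obtain x where x: "x \<in> V - {0}" "e = {x, par x}" using Edef by blast
    have "par x < x \<and> par x \<in> V" using par x(1) by blast
    then have "par x \<noteq> x" "par x \<in> V" by auto
    then show "e \<subseteq> V \<and> card e = 2" using x by auto
  qed
  have G: "is_graph V E" unfolding is_graph_def using fin card2 by blast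
  have edge: "{x, par x} \<in> E" if "x \<in> V - {0}" for x using that Edef by blast
  have reach0: "x \<in> V \<Longrightarrow> reachable E x 0" for x
  proof (induction x rule: less_induct)
    case (less x)
    show ?case
    proof (cases "x = 0")
      case True then show ?thesis by (simp add: reachable_refl)
    next
      case False
      then have xx: "x \<in> V - {0}" using less.prems by simp
      have "reachable E (par x) 0" using less.IH par xx by blast
      moreover have "reachable E x (par x)" using reachable_edge edge[OF xx] by blast
      ultimately show ?thesis using reachable_trans by blast
    qed
  qed
  have C: "connected_graph V E" unfolding connected_graph_def
    using r reach0 reachable_sym reachable_trans by blast
  have nbr: "y = par x" if xy: "{x,y} \<in> E" "y < x" for x y
  proof -
    obtain w where w: "w \<in> V - {0}" "{x,y} = {w, par w}" using xy(1) Edef by blast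
    have "par w < w" using par w(1) by blast
    then show ?thesis using w(2) xy(2) by (auto simp: doubleton_eq_iff)
  qed
  have noloop: "x \<noteq> y" if "{x,y} \<in> E" for x y
    using card2 that by fastforce
  have NC: "\<not> has_cycle E"
  proof
    assume "has_cycle E"
    then obtain xs where xs: "is_walk E xs" "length xs \<ge> 4" "hd xs = last xs" "distinct (tl xs)"
      unfolding has_cycle_def by blast
    define ys where "ys = tl xs"
    define m where "m = length ys"
    have m3: "m \<ge> 3" using xs unfolding m_def ys_def by simp
    have ysi: "ys ! i = xs ! Suc i" if "i < m" for i using that unfolding ys_def m_def by (simp add: nth_tl)
    have E1: "{ys ! k, (if k + 1 < m then ys ! (k+1) else ys ! 0)} \<in> E" if "k < m" for k
    proof (cases "k + 1 < m")
      case True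
      then show ?thesis using xs(1) ysi[of k] ysi[of "k+1"] unfolding is_walk_def m_def ys_def by auto
    next
      case False
      then have k: "k = m - 1" using that by simp
      have "ys ! k = xs ! Suc k" using ysi[of k] that by simp
      moreover have "Suc k = length xs - 1" using k m3 unfolding m_def ys_def by simp
      moreover have "xs \<noteq> []" using xs(1) by auto
      ultimately have "ys ! k = last xs" by (simp add: last_conv_nth)
      then have "ys ! k = xs ! 0" using xs(3) \<open>xs \<noteq> []\<close> by (simp add: hd_conv_nth)
      moreover have "ys ! 0 = xs ! 1" using ysi[of 0] m3 by simp
      moreover have "{xs ! 0, xs ! Suc 0} \<in> E" using xs(1) xs(2) unfolding is_walk_def by auto
      ultimately show ?thesis using False by simp
    qed
    have ne: "set ys \<noteq> {}" using m3 unfolding m_def by auto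
    define M where "M = Max (set ys)"
    have "M \<in> set ys" unfolding M_def using ne by simp
    then obtain k where k: "k < m" "ys ! k = M" unfolding m_def by (metis in_set_conv_nth)
    have maxM: "\<And>y. y \<in> set ys \<Longrightarrow> y \<le> M" unfolding M_def by simp
    define ia where "ia = (if k + 1 < m then k + 1 else 0)"
    define ib where "ib = (if k > 0 then k - 1 else m - 1)"
    have ia: "ia < m" "{M, ys ! ia} \<in> E" using E1[OF k(1)] k m3 unfolding ia_def by auto
    have ib: "ib < m" "{ys ! ib, M} \<in> E"
    proof -
      show "ib < m" using k m3 unfolding ib_def by auto
      show "{ys ! ib, M} \<in> E"
      proof (cases "k > 0")
        case True
        then show ?thesis using E1[of "k-1"] k unfolding ib_def by auto
      next
        case False
        then show ?thesis using E1[of "m-1"] k m3 unfolding ib_def by auto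
      qed
    qed
    have iab: "ia \<noteq> ib" using k m3 unfolding ia_def ib_def by auto
    have dab: "ys ! ia \<noteq> ys ! ib" using iab ia(1) ib(1) xs(4) unfolding ys_def m_def
      by (simp add: nth_eq_iff_index_eq)
    have "ys ! ia < M" using maxM[of "ys ! ia"] noloop[OF ia(2)] ia(1) unfolding m_def by auto
    then have a1: "ys ! ia = par M" using nbr[OF ia(2)] by simp
    have "ys ! ib < M" using maxM[of "ys ! ib"] noloop[OF ib(2)] ib(1) unfolding m_def by auto
    then have a2: "ys ! ib = par M" using nbr[of M "ys ! ib"] ib(2) by (simp add: insert_commute)
    show False using a1 a2 dab by simp
  qed
  show ?thesis unfolding is_tree_def using G C NC by blast
qed



lemma ptree_sdeg:
  fixes par :: "nat \<Rightarrow> nat"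
  assumes par: "\<forall>x\<in>V-{0}. par x < x" and Edef: "E = (\<lambda>x. {x, par x}) ` (V - {0})" and fin: "finite V"
  shows "sdeg E s v = int (card {x\<in>V-{0}. (x = v \<or> par x = v) \<and> s {x, par x}})
                    - int (card {x\<in>V-{0}. (x = v \<or> par x = v) \<and> \<not> s {x, par x}})"
proof -
  define f where "f = (\<lambda>x. {x, par x})"
  have inj: "inj_on f (V - {0})"
  proof (rule inj_onI)
    fix x y assume xy: "x \<in> V - {0}" "y \<in> V - {0}" "f x = f y"
    have "par x < x" "par y < y" using par xy by auto
    then show "x = y" using xy(3) unfolding f_def by (auto simp: doubleton_eq_iff)
  qed
  have e1: "{e\<in>E. v \<in> e \<and> s e} = f ` {x\<in>V-{0}. (x = v \<or> par x = v) \<and> s {x, par x}}"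
    unfolding Edef f_def by auto
  have e2: "{e\<in>E. v \<in> e \<and> \<not> s e} = f ` {x\<in>V-{0}. (x = v \<or> par x = v) \<and> \<not> s {x, par x}}"
    unfolding Edef f_def by auto
  have c1: "card (f ` {x\<in>V-{0}. (x = v \<or> par x = v) \<and> s {x, par x}}) = card {x\<in>V-{0}. (x = v \<or> par x = v) \<and> s {x, par x}}"
    by (rule card_image) (rule inj_on_subset[OF inj], blast)
  have c2: "card (f ` {x\<in>V-{0}. (x = v \<or> par x = v) \<and> \<not> s {x, par x}}) = card {x\<in>V-{0}. (x = v \<or> par x = v) \<and> \<not> s {x, par x}}"
    by (rule card_image) (rule inj_on_subset[OF inj], blast)
  show ?thesis unfolding sdeg_def e1 e2 c1 c2 ..
qed

definition cV :: "nat \<Rightarrow> (nat \<Rightarrow> nat) \<Rightarrow> (nat \<Rightarrow> nat) \<Rightarrow> nat set" where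
  "cV m P Q = {..<m} \<union> {x. m \<le> x \<and> x div m - 1 < P (x mod m) + Q (x mod m)}"
definition cpar :: "nat \<Rightarrow> nat \<Rightarrow> nat" where
  "cpar m x = (if x < m then 0 else x mod m)"
definition cE :: "nat \<Rightarrow> (nat \<Rightarrow> nat) \<Rightarrow> (nat \<Rightarrow> nat) \<Rightarrow> nat set set" where
  "cE m P Q = (\<lambda>x. {x, cpar m x}) ` (cV m P Q - {0})"
definition cneg :: "nat \<Rightarrow> (nat \<Rightarrow> nat) \<Rightarrow> nat \<Rightarrow> bool" where
  "cneg m P x = (m \<le> x \<and> P (x mod m) \<le> x div m - 1)"
definition cs :: "nat \<Rightarrow> (nat \<Rightarrow> nat) \<Rightarrow> nat set \<Rightarrow> bool" where
  "cs m P e = (\<forall>x\<in>e. \<not> cneg m P x)"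

lemma encdm:
  assumes "i < (m::nat)"
  shows "(Suc j * m + i) div m = Suc j" "(Suc j * m + i) mod m = i"
proof -
  have m0: "m \<noteq> 0" using assms by simp
  have "(i + Suc j * m) div m = Suc j + i div m" using div_mult_self1[OF m0] by blast
  then show "(Suc j * m + i) div m = Suc j" using assms by (simp add: add.commute)
  have "(i + Suc j * m) mod m = i mod m" using mod_mult_self1 by blast
  then show "(Suc j * m + i) mod m = i" using assms by (simp add: add.commute)
qed

lemma enc:
  assumes "0 < m" "i < m"
  shows "{x. m \<le> x \<and> x mod m = i \<and> R (x div m - 1)} = (\<lambda>j. Suc j * m + i) ` {j. R j}"
proof
  show "{x. m \<le> x \<and> x mod m = i \<and> R (x div m - 1)} \<subseteq> (\<lambda>j. Suc j * m + i) ` {j. R j}"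
  proof
    fix x assume x: "x \<in> {x. m \<le> x \<and> x mod m = i \<and> R (x div m - 1)}"
    have pos: "0 < x div m" using assms x by (simp add: div_greater_zero_iff)
    have "x = Suc (x div m - 1) * m + i" using pos x div_mult_mod_eq[of x m] by simp
    moreover have "R (x div m - 1)" using x by simp
    ultimately show "x \<in> (\<lambda>j. Suc j * m + i) ` {j. R j}" by blast
  qed
next
  show "(\<lambda>j. Suc j * m + i) ` {j. R j} \<subseteq> {x. m \<le> x \<and> x mod m = i \<and> R (x div m - 1)}"
  proof
    fix x assume "x \<in> (\<lambda>j. Suc j * m + i) ` {j. R j}"
    then obtain j where j: "x = Suc j * m + i" "R j" by blast
    have "m \<le> Suc j * m" by simp
    then show "x \<in> {x. m \<le> x \<and> x mod m = i \<and> R (x div m - 1)}"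
      using j encdm[OF assms(2), of j] by simp
  qed
qed

lemma card_enc:
  assumes "0 < (m::nat)" "i < m"
  shows "card {x. m \<le> x \<and> x mod m = i \<and> R (x div m - 1)} = card {j. R j}"
proof -
  have "inj_on (\<lambda>j. Suc j * m + i) {j. R j}" using assms by (auto intro!: inj_onI)
  then show ?thesis unfolding enc[OF assms] by (rule card_image)
qed

lemma mod_lt_self: "0 < (m::nat) \<Longrightarrow> m \<le> x \<Longrightarrow> x mod m < x"
  using mod_less_divisor[of m x] by linarith

lemma cV_fin: "0 < m \<Longrightarrow> finite (cV m P Q)"
proof -
  assume m: "0 < m"
  have "{x. m \<le> x \<and> x div m - 1 < P (x mod m) + Q (x mod m)}
        \<subseteq> (\<Union>i<m. {x. m \<le> x \<and> x mod m = i \<and> (x div m - 1) < P i + Q i})"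
    using m by auto
  also have "\<dots> = (\<Union>i<m. (\<lambda>j. Suc j * m + i) ` {j. j < P i + Q i})"
    by (intro SUP_cong refl enc[OF m]) simp
  finally show ?thesis unfolding cV_def by (auto intro: finite_subset)
qed

lemma c_tree: "0 < m \<Longrightarrow> is_tree (cV m P Q) (cE m P Q)"
proof -
  assume m: "0 < m"
  show ?thesis
  proof (rule ptree[where par = "cpar m"])
    show "finite (cV m P Q)" using cV_fin[OF m] .
    show "0 \<in> cV m P Q" using m by (simp add: cV_def)
    show "\<forall>x\<in>cV m P Q - {0}. cpar m x < x \<and> cpar m x \<in> cV m P Q"
      using m by (auto simp: cV_def cpar_def mod_lt_self)
    show "cE m P Q = (\<lambda>x. {x, cpar m x}) ` (cV m P Q - {0})" by (simp add: cE_def)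
  qed
qed

lemma c_sdeg:
  assumes m: "0 < m"
  shows "sdeg (cE m P Q) (cs m P) v =
     int (card {x\<in>cV m P Q-{0}. (x = v \<or> cpar m x = v) \<and> \<not> cneg m P x})
   - int (card {x\<in>cV m P Q-{0}. (x = v \<or> cpar m x = v) \<and> cneg m P x})"
proof -
  have par: "\<forall>x\<in>cV m P Q - {0}. cpar m x < x" using m by (auto simp: cV_def cpar_def mod_lt_self)
  have cs: "cs m P {x, cpar m x} = (\<not> cneg m P x)" for x
  proof -
    have "cpar m x < m" using m by (simp add: cpar_def)
    then have "\<not> cneg m P (cpar m x)" by (simp add: cneg_def)
    then show ?thesis by (auto simp: cs_def)
  qed
  show ?thesis
    using ptree_sdeg[OF par cE_def cV_fin[OF m], of "cs m P" v] by (simp add: cs)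
qed

lemma fin_enc:
  assumes "0 < (m::nat)" "i < m" "finite {j. R j}"
  shows "finite {x. m \<le> x \<and> x mod m = i \<and> R (x div m - 1)}"
  unfolding enc[OF assms(1,2)] using assms(3) by simp

lemma card_ivl: "card {j::nat. a \<le> j \<and> j < a + b} = b"
proof -
  have "{j::nat. a \<le> j \<and> j < a + b} = {a..<a+b}" by auto
  then show ?thesis by simp
qed

lemma sdeg_root:
  assumes m: "0 < m"
  shows "sdeg (cE m P Q) (cs m P) 0 = int (m - 1 + P 0) - int (Q 0)"
proof -
  have A1: "{x\<in>cV m P Q-{0}. (x = 0 \<or> cpar m x = 0) \<and> \<not> cneg m P x}
      = {1..<m} \<union> {x. m \<le> x \<and> x mod m = 0 \<and> x div m - 1 < P 0}"
    using m by (auto simp: cV_def cpar_def cneg_def)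
  have A2: "{x\<in>cV m P Q-{0}. (x = 0 \<or> cpar m x = 0) \<and> cneg m P x}
      = {x. m \<le> x \<and> x mod m = 0 \<and> (P 0 \<le> x div m - 1 \<and> x div m - 1 < P 0 + Q 0)}"
    using m by (auto simp: cV_def cpar_def cneg_def)
  have f1: "finite {x. m \<le> x \<and> x mod m = 0 \<and> x div m - 1 < P 0}"
    by (rule fin_enc[OF m m]) simp
  have c1: "card ({1..<m} \<union> {x. m \<le> x \<and> x mod m = 0 \<and> x div m - 1 < P 0}) = (m - 1) + P 0"
  proof -
    have "card ({1..<m} \<union> {x. m \<le> x \<and> x mod m = 0 \<and> x div m - 1 < P 0})
        = card {1..<m} + card {x. m \<le> x \<and> x mod m = 0 \<and> x div m - 1 < P 0}"
      by (rule card_Un_disjoint) (use f1 in auto)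
    also have "card {x. m \<le> x \<and> x mod m = 0 \<and> x div m - 1 < P 0} = card {j. j < P 0}"
      by (rule card_enc[OF m m])
    finally show ?thesis by simp
  qed
  have c2: "card {x. m \<le> x \<and> x mod m = 0 \<and> (P 0 \<le> x div m - 1 \<and> x div m - 1 < P 0 + Q 0)} = Q 0"
    using card_enc[OF m m, of "\<lambda>j. P 0 \<le> j \<and> j < P 0 + Q 0"] card_ivl by simp
  show ?thesis unfolding c_sdeg[OF m] A1 A2 c1 c2 ..
qed

lemma sdeg_node:
  assumes m: "0 < m" and v: "0 < v" "v < m"
  shows "sdeg (cE m P Q) (cs m P) v = int (Suc (P v)) - int (Q v)"
proof -
  have A1: "{x\<in>cV m P Q-{0}. (x = v \<or> cpar m x = v) \<and> \<not> cneg m P x}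
      = insert v {x. m \<le> x \<and> x mod m = v \<and> x div m - 1 < P v}"
    using m v by (auto simp: cV_def cpar_def cneg_def)
  have A2: "{x\<in>cV m P Q-{0}. (x = v \<or> cpar m x = v) \<and> cneg m P x}
      = {x. m \<le> x \<and> x mod m = v \<and> (P v \<le> x div m - 1 \<and> x div m - 1 < P v + Q v)}"
    using m v by (auto simp: cV_def cpar_def cneg_def)
  have f1: "finite {x. m \<le> x \<and> x mod m = v \<and> x div m - 1 < P v}"
    by (rule fin_enc[OF m v(2)]) simp
  have c1: "card (insert v {x. m \<le> x \<and> x mod m = v \<and> x div m - 1 < P v}) = Suc (P v)"
  proof -
    have "card (insert v {x. m \<le> x \<and> x mod m = v \<and> x div m - 1 < P v})
        = Suc (card {x. m \<le> x \<and> x mod m = v \<and> x div m - 1 < P v})"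
      using f1 v by simp
    also have "card {x. m \<le> x \<and> x mod m = v \<and> x div m - 1 < P v} = card {j. j < P v}"
      by (rule card_enc[OF m v(2)])
    finally show ?thesis by simp
  qed
  have c2: "card {x. m \<le> x \<and> x mod m = v \<and> (P v \<le> x div m - 1 \<and> x div m - 1 < P v + Q v)} = Q v"
    using card_enc[OF m v(2), of "\<lambda>j. P v \<le> j \<and> j < P v + Q v"] card_ivl by simp
  show ?thesis unfolding c_sdeg[OF m] A1 A2 c1 c2 ..
qed

lemma sdeg_leaf:
  assumes m: "0 < m" and v: "v \<in> cV m P Q" "m \<le> v"
  shows "sdeg (cE m P Q) (cs m P) v = (if cneg m P v then -1 else 1)"
proof -
  have lt: "cpar m x < m" for x using m by (simp add: cpar_def)
  have v0: "v \<noteq> 0" using m v by simp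
  have nlt: "\<not> m \<le> cpar m x" for x using lt[of x] by simp
  have A1: "{x\<in>cV m P Q-{0}. (x = v \<or> cpar m x = v) \<and> \<not> cneg m P x}
      = (if cneg m P v then {} else {v})"
    using v v0 nlt by (auto split: if_splits)
  have A2: "{x\<in>cV m P Q-{0}. (x = v \<or> cpar m x = v) \<and> cneg m P x}
      = (if cneg m P v then {v} else {})"
    using v v0 nlt by (auto split: if_splits)
  show ?thesis unfolding c_sdeg[OF m] A1 A2 by simp
qed



lemma c_image:
  assumes m: "0 < m" and p: "1 \<le> P 0" and q: "1 \<le> Q 0"
  shows "sdeg (cE m P Q) (cs m P) ` cV m P Q
    = {int (m - 1 + P 0) - int (Q 0)} \<union> (\<lambda>v. int (Suc (P v)) - int (Q v)) ` {1..<m} \<union> {1, -1}"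
proof
  show "sdeg (cE m P Q) (cs m P) ` cV m P Q
    \<subseteq> {int (m - 1 + P 0) - int (Q 0)} \<union> (\<lambda>v. int (Suc (P v)) - int (Q v)) ` {1..<m} \<union> {1, -1}"
  proof
    fix y assume "y \<in> sdeg (cE m P Q) (cs m P) ` cV m P Q"
    then obtain x where x: "x \<in> cV m P Q" "y = sdeg (cE m P Q) (cs m P) x" by blast
    consider "x = 0" | "0 < x \<and> x < m" | "m \<le> x" by linarith
    then show "y \<in> {int (m - 1 + P 0) - int (Q 0)} \<union> (\<lambda>v. int (Suc (P v)) - int (Q v)) ` {1..<m} \<union> {1, -1}"
    proof cases
      case 1 then show ?thesis using x sdeg_root[OF m] by simp
    next
      case 2 then show ?thesis using x sdeg_node[OF m, of x] by auto
    next
      case 3 then show ?thesis using x sdeg_leaf[OF m x(1)] by simp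
    qed
  qed
next
  have r: "0 \<in> cV m P Q" using m by (simp add: cV_def)
  have nodes: "{1..<m} \<subseteq> cV m P Q" by (auto simp: cV_def)
  have l1: "m \<in> cV m P Q" "\<not> cneg m P m" using m p by (auto simp: cV_def cneg_def)
  have dm: "(Suc (P 0) * m) div m = Suc (P 0)" "(Suc (P 0) * m) mod m = 0"
    using encdm[OF m, of "P 0"] by simp_all
  have l2: "Suc (P 0) * m \<in> cV m P Q" "cneg m P (Suc (P 0) * m)" "m \<le> Suc (P 0) * m"
    using m q dm by (auto simp: cV_def cneg_def)
  show "{int (m - 1 + P 0) - int (Q 0)} \<union> (\<lambda>v. int (Suc (P v)) - int (Q v)) ` {1..<m} \<union> {1, -1}
    \<subseteq> sdeg (cE m P Q) (cs m P) ` cV m P Q"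
  proof -
    have "int (m - 1 + P 0) - int (Q 0) \<in> sdeg (cE m P Q) (cs m P) ` cV m P Q"
      using sdeg_root[OF m] r by (metis image_eqI)
    moreover have "(\<lambda>v. int (Suc (P v)) - int (Q v)) ` {1..<m} \<subseteq> sdeg (cE m P Q) (cs m P) ` cV m P Q"
    proof
      fix y assume "y \<in> (\<lambda>v. int (Suc (P v)) - int (Q v)) ` {1..<m}"
      then obtain v where v: "v \<in> {1..<m}" "y = int (Suc (P v)) - int (Q v)" by blast
      have "sdeg (cE m P Q) (cs m P) v = y" using sdeg_node[OF m, of v] v by simp
      then show "y \<in> sdeg (cE m P Q) (cs m P) ` cV m P Q" using v nodes by blast
    qed
    moreover have "1 \<in> sdeg (cE m P Q) (cs m P) ` cV m P Q"
      using sdeg_leaf[OF m l1(1)] l1 by (metis image_eqI order_refl)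
    moreover have "-1 \<in> sdeg (cE m P Q) (cs m P) ` cV m P Q"
      using sdeg_leaf[OF m l2(1) l2(3)] l2 by (metis image_eqI)
    ultimately show ?thesis by blast
  qed
qed

lemma c_edge: "x \<in> cV m P Q - {0} \<Longrightarrow> {x, cpar m x} \<in> cE m P Q"
  by (auto simp: cE_def)

lemma c_dist0:
  assumes m: "0 < m" and x: "x \<in> cV m P Q"
  shows "dist (cE m P Q) x 0 \<le> (if m = 1 then 1 else 2)"
proof -
  consider "x = 0" | "0 < x \<and> x < m" | "m \<le> x \<and> x mod m = 0" | "m \<le> x \<and> x mod m \<noteq> 0" by linarith
  then show ?thesis
  proof cases
    case 1 then show ?thesis by (simp add: dist_refl)
  next
    case 2
    then have "{x, 0} \<in> cE m P Q" using c_edge[of x m P Q] x by (simp add: cpar_def)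
    then show ?thesis using dist_edge by fastforce
  next
    case 3
    then have "{x, 0} \<in> cE m P Q" using c_edge[of x m P Q] x m by (simp add: cpar_def)
    then show ?thesis using dist_edge by fastforce
  next
    case 4
    define c where "c = x mod m"
    have c: "c \<in> cV m P Q - {0}" "c < m" using 4 m unfolding c_def by (auto simp: cV_def)
    have e1: "{x, c} \<in> cE m P Q" using c_edge[of x m P Q] x 4 m unfolding c_def by (simp add: cpar_def)
    have e2: "{c, 0} \<in> cE m P Q" using c_edge[of c m P Q] c by (simp add: cpar_def)
    have "m \<noteq> 1" using 4 by auto
    have "dist (cE m P Q) x 0 \<le> dist (cE m P Q) x c + dist (cE m P Q) c 0"
      using dist_triangle reachable_edge[OF e1] reachable_edge[OF e2] by blast
    also have "\<dots> \<le> 2" using dist_edge[OF e1] dist_edge[OF e2] by simp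
    finally show ?thesis using \<open>m \<noteq> 1\<close> by simp
  qed
qed

lemma diam_center:
  assumes T: "is_tree V E" and c: "c \<in> V" and r: "\<forall>x\<in>V. dist E x c \<le> r"
  shows "tree_diam V E \<le> 2 * r"
proof -
  have fin: "finite V" and con: "\<forall>u\<in>V. \<forall>v\<in>V. reachable E u v" and ne: "V \<noteq> {}"
    using T unfolding is_tree_def is_graph_def connected_graph_def by auto
  show ?thesis
  proof (rule diam_le[OF fin ne], intro ballI)
    fix u v assume uv: "u \<in> V" "v \<in> V"
    have h1: "dist E u v \<le> dist E u c + dist E c v" using dist_triangle con uv c by blast
    have h2: "dist E c v \<le> dist E v c" using dist_sym con uv c by blast
    have "dist E u c \<le> r" "dist E v c \<le> r" using r uv by auto
    then show "dist E u v \<le> 2 * r" using h1 h2 by linarith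
  qed
qed

lemma diam_edge_center:
  assumes T: "is_tree V E" and c: "c1 \<in> V" "c2 \<in> V" "{c1, c2} \<in> E"
    and r: "\<forall>x\<in>V. dist E x c1 \<le> 1 \<or> dist E x c2 \<le> 1"
  shows "tree_diam V E \<le> 3"
proof -
  have fin: "finite V" and con: "\<forall>u\<in>V. \<forall>v\<in>V. reachable E u v" and ne: "V \<noteq> {}"
    using T unfolding is_tree_def is_graph_def connected_graph_def by auto
  have d12: "dist E c1 c2 \<le> 1" "dist E c2 c1 \<le> 1" using dist_edge c(3) by (auto simp: insert_commute)
  have cc: "dist E a b \<le> 1" if "a \<in> {c1,c2}" "b \<in> {c1,c2}" for a b
    using that d12 dist_refl by auto
  show ?thesis
  proof (rule diam_le[OF fin ne], intro ballI)
    fix u v assume uv: "u \<in> V" "v \<in> V"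
    obtain a where a: "a \<in> {c1,c2}" "dist E u a \<le> 1" using r uv by blast
    obtain b where b: "b \<in> {c1,c2}" "dist E v b \<le> 1" using r uv by blast
    have aV: "a \<in> V" "b \<in> V" using a(1) b(1) c by auto
    have "dist E u v \<le> dist E u a + dist E a v" using dist_triangle con uv aV by blast
    moreover have "dist E a v \<le> dist E a b + dist E b v" using dist_triangle con uv aV by blast
    moreover have "dist E b v \<le> dist E v b" using dist_sym con uv aV by blast
    ultimately show "dist E u v \<le> 3" using a b cc[OF a(1) b(1)] by linarith
  qed
qed



lemma lower:
  assumes T: "is_tree V E" and R: "realizes V E s D" and one: "1 \<in> D"
    and cD: "d + 1 \<le> card D" and d1: "2 \<le> d" and d4: "d \<le> 4"
  shows "d \<le> tree_diam V E"
proof (rule ccontr)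
  assume "\<not> d \<le> tree_diam V E"
  then have "tree_diam V E \<le> d - 1" by simp
  moreover have "D = sdeg E s ` V" using R unfolding realizes_def .
  ultimately have "card D \<le> d - 1 + 1" using LB[OF T, of s "d - 1"] one d1 d4 by simp
  then show False using cD d1 by simp
qed

theorem mainTheorem7:
  fixes n :: nat and z :: "nat \<Rightarrow> int" and D :: "int set"
  assumes "n \<ge> 1"
    and "inj_on z {1..n}"
    and "\<forall>i\<in>{1..n}. z i \<noteq> 1 \<and> z i \<noteq> -1"
    and "D = {1, -1} \<union> z ` {1..n}"
  shows "(n = 1 \<longrightarrow> diamD D = 2) \<and> (n = 2 \<longrightarrow> diamD D = 3) \<and> (n > 2 \<longrightarrow> diamD D = 4)"
proof -
  note n1 = assms(1) and inj = assms(2) and nz = assms(3) and Dd = assms(4)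
  define d where "d = (if n = 1 then 2 else if n = 2 then 3 else (4::nat))"
  define t where "t i = (if i = 0 then z n - int (n - 1) else z i - 1)" for i
  define P where "P i = nat (t i) + 1" for i
  define Q where "Q i = nat (- t i) + 1" for i
  have PQ: "int (P i) - int (Q i) = t i" for i unfolding P_def Q_def by simp
  have m: "0 < n" using n1 by simp
  define V0 where "V0 = cV n P Q"
  define E0 where "E0 = cE n P Q"
  define s0 where "s0 = cs n P"
  have T0: "is_tree V0 E0" unfolding V0_def E0_def using c_tree[OF m] .
  have oneD: "1 \<in> D" using Dd by simp
  have cD: "card D = n + 2"
  proof -
    have "card (z ` {1..n}) = n" using card_image[OF inj] by simp
    moreover have "{1, -1::int} \<inter> z ` {1..n} = {}" using nz by auto
    ultimately have "card ({1, -1::int} \<union> z ` {1..n}) = 2 + n"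
      by (subst card_Un_disjoint) auto
    then show ?thesis using Dd by simp
  qed
  have R0: "realizes V0 E0 s0 D"
  proof -
    have "sdeg E0 s0 ` V0 = {int (n - 1 + P 0) - int (Q 0)} \<union> (\<lambda>v. int (Suc (P v)) - int (Q v)) ` {1..<n} \<union> {1, -1}"
      unfolding V0_def E0_def s0_def by (rule c_image[OF m]) (simp_all add: P_def Q_def)
    also have "int (n - 1 + P 0) - int (Q 0) = z n" using PQ[of 0] unfolding t_def by simp
    also have "(\<lambda>v. int (Suc (P v)) - int (Q v)) ` {1..<n} = z ` {1..<n}"
    proof (rule image_cong[OF refl])
      fix v assume "v \<in> {1..<n}"
      then show "int (Suc (P v)) - int (Q v) = z v" using PQ[of v] unfolding t_def by simp
    qed
    also have "{z n} \<union> z ` {1..<n} \<union> {1, -1} = D"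
    proof -
      have "{1..n} = insert n {1..<n}" using n1 by auto
      then show ?thesis using Dd by auto
    qed
    finally show ?thesis unfolding realizes_def by simp
  qed
  have up: "tree_diam V0 E0 \<le> d"
  proof -
    have r0: "0 \<in> V0" unfolding V0_def using m by (simp add: cV_def)
    consider "n = 1" | "n = 2" | "n > 2" using n1 by linarith
    then show ?thesis
    proof cases
      case 1
      have "\<forall>x\<in>V0. dist E0 x 0 \<le> 1"
      proof
        fix x assume "x \<in> V0"
        then show "dist E0 x 0 \<le> 1" using c_dist0[OF m, of x P Q] 1 unfolding V0_def E0_def by simp
      qed
      then have "tree_diam V0 E0 \<le> 2 * 1" by (rule diam_center[OF T0 r0])
      then show ?thesis using 1 unfolding d_def by simp
    next
      case 2
      have r1: "1 \<in> V0" unfolding V0_def using 2 by (simp add: cV_def)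
      have e01: "{0, 1} \<in> E0" using c_edge[of 1 n P Q] r1 2 unfolding V0_def E0_def
        by (simp add: cpar_def insert_commute)
      have near: "\<forall>x\<in>V0. dist E0 x 0 \<le> 1 \<or> dist E0 x 1 \<le> 1"
      proof
        fix x assume x: "x \<in> V0"
        consider "x = 0" | "x = 1" | "x \<ge> 2" by linarith
        then show "dist E0 x 0 \<le> 1 \<or> dist E0 x 1 \<le> 1"
        proof cases
          case 1 then show ?thesis by (simp add: dist_refl)
        next
          case 2 then show ?thesis by (simp add: dist_refl)
        next
          case 3
          have "{x, cpar n x} \<in> E0" using c_edge[of x n P Q] x 3 unfolding V0_def E0_def by simp
          moreover have "cpar n x = 0 \<or> cpar n x = 1" using 3 \<open>n = 2\<close> by (auto simp: cpar_def)
          ultimately show ?thesis using dist_edge[of x "cpar n x" E0] by (cases "cpar n x = 0") auto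
        qed
      qed
      show ?thesis using diam_edge_center[OF T0 r0 r1 e01 near] 2 unfolding d_def by simp
    next
      case 3
      have "\<forall>x\<in>V0. dist E0 x 0 \<le> 2"
      proof
        fix x assume "x \<in> V0"
        then show "dist E0 x 0 \<le> 2" using c_dist0[OF m, of x P Q] 3 unfolding V0_def E0_def by simp
      qed
      then have "tree_diam V0 E0 \<le> 2 * 2" by (rule diam_center[OF T0 r0])
      then show ?thesis using 3 unfolding d_def by simp
    qed
  qed
  have lowgen: "d \<le> tree_diam V E" if "is_tree V E" "realizes V E s D" for V E s
  proof -
    have "d + 1 \<le> card D" "2 \<le> d" "d \<le> 4" using cD n1 unfolding d_def by auto
    then show ?thesis using lower[OF that oneD] by blast
  qed
  have "diamD D = d"
    unfolding diamD_def
  proof (rule Least_equality)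
    show "\<exists>V E s. is_tree V E \<and> realizes V E s D \<and> tree_diam V E = d"
      using T0 R0 up lowgen[OF T0 R0] by (intro exI[of _ V0] exI[of _ E0] exI[of _ s0]) simp
  next
    fix y assume "\<exists>V E s. is_tree V E \<and> realizes V E s D \<and> tree_diam V E = y"
    then show "d \<le> y" using lowgen by blast
  qed
  then show ?thesis unfolding d_def by auto
qed


end
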